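(* For every $T\ge T_0[\varphi_1]$ and every $2l\in(0,T/\ln T]$, the system of functions $$\Big\{|\tilde Z(t)|,\ |\tilde Z(t)|\cos\big(\tfrac{\pi}{l}(\varphi_1(t)-T)\big),\ |\tilde Z(t)|\sin\big(\tfrac{\pi}{l}(\varphi_1(t)-T)\big),\dots,|\tilde Z(t)|\cos\big(\tfrac{\pi}{l}n(\varphi_1(t)-T)\big),\ |\tilde Z(t)|\sin\big(\tfrac{\pi}{l}n(\varphi_1(t)-T)\big),\dots\Big\},$$ $t\in[\varphi_1^{-1}(T),\varphi_1^{-1}(T+2l)]$, is an orthogonal system on $[\varphi_1^{-1}(T),\varphi_1^{-1}(T+2l)]$ (with respect to the unweighted $L^2$ inner product $\int f g\,dt$).
   Context: Let $Z(t)=e^{i\vartheta(t)}\zeta(\tfrac12+it)$ with $\vartheta(t)=-\frac t2\ln\pi+\operatorname{Im}\ln\Gamma(\frac14+\frac{it}{2})$. Let $\mu(y)$ be continuous with $\mu(y)\ge 7y\ln y$ and $\Phi(\varphi)=\int_0^{\mu[\varphi]}Z^2(t)e^{-2t/\varphi}\,dt$. A Jacob's ladder is a continuous solution $\varphi(T)$, $T\ge T_0$, of $\Phi(\varphi(T))=\int_0^T Z^2(t)\,dt$ (from the author's earlier work). Put $\varphi_1=\frac12\varphi$ (defined for $T\ge T_0[\varphi_1]$) and $\tilde Z^2(t)=\frac{Z^2(t)}{2\Phi'(\varphi(t))}\ge0$, so $\varphi_1'=\tilde Z^2$, and $|\tilde Z(t)|=\sqrt{\tilde Z^2(t)}$.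 $\varphi_1$ is increasing and $\varphi_1^{-1}(x)$ denotes the unique $t$ with $\varphi_1(t)=x$. *)

theory Defs
  imports "HOL-Analysis.Analysis"
begin

text \<open>Riemann zeta on the half-plane Re s > 0 via the alternating (Dirichlet eta) series:
  zeta s = (1 - 2^(1-s))^(-1) * sum_{n>=1} (-1)^(n-1) n^(-s).  This is the analytic
  continuation of zeta there (valid on the critical line, where 1 - 2^(1-s) is nonzero).\<close>
definition zeta_eta :: "complex \<Rightarrow> complex" where
  "zeta_eta s = (\<Sum>n. (-1) ^ n / (of_nat (Suc n)) powr s) / (1 - 2 powr (1 - s))"

definition RS_theta :: "real \<Rightarrow> real" where
  "RS_theta t = - (t / 2) * ln pi + Im (ln_Gamma (Complex (1/4) (t/2)))"

text \<open>Hardy's function Z(t) = e^{i theta(t)} zeta(1/2 + i t); it is real-valued, we take its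
  real part to view it as a real function.\<close>
definition HardyZ :: "real \<Rightarrow> real" where
  "HardyZ t = Re (exp (\<i> * of_real (RS_theta t)) * zeta_eta (Complex (1/2) t))"

definition Phi_fun :: "(real \<Rightarrow> real) \<Rightarrow> real \<Rightarrow> real" where
  "Phi_fun \<mu> y = integral {0..\<mu> y} (\<lambda>t. (HardyZ t)\<^sup>2 * exp (- 2 * t / y))"

definition jacob_ladder :: "(real \<Rightarrow> real) \<Rightarrow> real \<Rightarrow> (real \<Rightarrow> real) \<Rightarrow> bool" where
  "jacob_ladder \<mu> T0 \<phi> \<longleftrightarrow> continuous_on {T0..} \<phi> \<and>
     (\<forall>T\<ge>T0. Phi_fun \<mu> (\<phi> T) = integral {0..T} (\<lambda>t. (HardyZ t)\<^sup>2))"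

definition Ztilde2 :: "(real \<Rightarrow> real) \<Rightarrow> (real \<Rightarrow> real) \<Rightarrow> real \<Rightarrow> real" where
  "Ztilde2 \<mu> \<phi> t = (HardyZ t)\<^sup>2 / (2 * deriv (Phi_fun \<mu>) (\<phi> t))"

definition inv_on_from :: "real \<Rightarrow> (real \<Rightarrow> real) \<Rightarrow> real \<Rightarrow> real" where
  "inv_on_from T0 f x = (THE t. T0 \<le> t \<and> f t = x)"

text \<open>The system: index 0 gives |Z~|, index 2n-1 gives |Z~| cos(pi/l n (phi1 - T)),
  index 2n gives |Z~| sin(pi/l n (phi1 - T)), n >= 1.\<close>
definition trig_system :: "(real \<Rightarrow> real) \<Rightarrow> (real \<Rightarrow> real) \<Rightarrow> real \<Rightarrow> real \<Rightarrow> nat \<Rightarrow> real \<Rightarrow> real" where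
  "trig_system a \<phi>1 T l k t =
     (if k = 0 then a t
      else if odd k then a t * cos (pi / l * real ((k + 1) div 2) * (\<phi>1 t - T))
      else a t * sin (pi / l * real (k div 2) * (\<phi>1 t - T)))"

end

theory Submission
  imports Defs
begin

lemma intC:
  fixes l T :: real and z :: int
  assumes l: "l > 0" and z: "z \<noteq> 0"
  shows "((\<lambda>x. cos (pi / l * of_int z * (x - T))) has_integral 0) {T..T+2*l}"
proof -
  define c where "c = pi / l * of_int z"
  have c0: "c \<noteq> 0" using l z by (simp add: c_def)
  have d: "\<And>x. ((\<lambda>x. sin (c*(x-T))/c) has_real_derivative cos (c*(x-T))) (at x within {T..T+2*l})"
    using c0 by (auto intro!: derivative_eq_intros)
  have "((\<lambda>x. cos (c * (x - T))) has_integral (sin (c*(T+2*l-T))/c - sin (c*(T-T))/c)) {T..T+2*l}"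
    by (rule fundamental_theorem_of_calculus) (use l d in \<open>auto simp: has_real_derivative_iff_has_vector_derivative[symmetric]\<close>)
  moreover have "sin (c*(T+2*l-T)) = 0"
  proof -
    have e: "c*(T+2*l-T) = of_int (2*z) * pi" using l by (simp add: c_def field_simps)
    show ?thesis unfolding e by (simp only: sin_times_pi_eq_0) simp
  qed
  ultimately show ?thesis by (simp add: c_def)
qed

lemma intS:
  fixes l T :: real and z :: int
  assumes l: "l > 0"
  shows "((\<lambda>x. sin (pi / l * of_int z * (x - T))) has_integral 0) {T..T+2*l}"
proof (cases "z = 0")
  case True then show ?thesis by simp
next
  case False
  define c where "c = pi / l * of_int z"
  have c0: "c \<noteq> 0" using l False by (simp add: c_def)
  have d: "\<And>x. ((\<lambda>x. - cos (c*(x-T))/c) has_real_derivative sin (c*(x-T))) (at x within {T..T+2*l})"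
    using c0 by (auto intro!: derivative_eq_intros)
  have "((\<lambda>x. sin (c * (x - T))) has_integral (- cos (c*(T+2*l-T))/c - (- cos (c*(T-T))/c))) {T..T+2*l}"
    by (rule fundamental_theorem_of_calculus) (use l d in \<open>auto simp: has_real_derivative_iff_has_vector_derivative[symmetric]\<close>)
  moreover have "cos (c*(T+2*l-T)) = 1"
  proof -
    have e: "c*(T+2*l-T) = (2 * pi) * of_int z" using l by (simp add: c_def field_simps)
    show ?thesis unfolding e by (rule cos_int_2pin)
  qed
  ultimately show ?thesis by (simp add: c_def)
qed

lemma C1:
  fixes l T :: real assumes l: "l > 0" and n: "n \<noteq> 0"
  shows "((\<lambda>x. cos (pi / l * real n * (x - T))) has_integral 0) {T..T+2*l}"
  using intC[OF l, of "int n" T] n by simp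

lemma S1:
  fixes l T :: real assumes l: "l > 0"
  shows "((\<lambda>x. sin (pi / l * real n * (x - T))) has_integral 0) {T..T+2*l}"
  using intS[OF l, of "int n" T] by simp

lemma CC:
  fixes l T :: real assumes l: "l > 0" and nm: "n \<noteq> m"
  shows "((\<lambda>x. cos (pi / l * real n * (x - T)) * cos (pi / l * real m * (x - T))) has_integral 0) {T..T+2*l}"
proof -
  have e: "cos (pi / l * real n * (x - T)) * cos (pi / l * real m * (x - T)) =
     (cos (pi / l * of_int (int n - int m) * (x - T)) + cos (pi / l * of_int (int n + int m) * (x - T))) / 2" for x
  proof -
    have a1: "pi / l * of_int (int n - int m) * (x - T) = pi / l * real n * (x - T) - pi / l * real m * (x - T)"
      by (simp add: algebra_simps)
    have a2: "pi / l * of_int (int n + int m) * (x - T) = pi / l * real n * (x - T) + pi / l * real m * (x - T)"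
      by (simp add: algebra_simps)
    show ?thesis by (simp only: a1 a2 cos_times_cos)
  qed
  have "((\<lambda>x. (cos (pi / l * of_int (int n - int m) * (x - T)) + cos (pi / l * of_int (int n + int m) * (x - T))) / 2) has_integral (0 + 0) / 2) {T..T+2*l}"
    by (intro has_integral_divide has_integral_add intC l) (use nm in auto)
  then show ?thesis unfolding e by simp
qed

lemma SS:
  fixes l T :: real assumes l: "l > 0" and nm: "n \<noteq> m"
  shows "((\<lambda>x. sin (pi / l * real n * (x - T)) * sin (pi / l * real m * (x - T))) has_integral 0) {T..T+2*l}"
proof -
  have e: "sin (pi / l * real n * (x - T)) * sin (pi / l * real m * (x - T)) =
     (cos (pi / l * of_int (int n - int m) * (x - T)) - cos (pi / l * of_int (int n + int m) * (x - T))) / 2" for x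
  proof -
    have a1: "pi / l * of_int (int n - int m) * (x - T) = pi / l * real n * (x - T) - pi / l * real m * (x - T)"
      by (simp add: algebra_simps)
    have a2: "pi / l * of_int (int n + int m) * (x - T) = pi / l * real n * (x - T) + pi / l * real m * (x - T)"
      by (simp add: algebra_simps)
    show ?thesis by (simp only: a1 a2 sin_times_sin)
  qed
  have "((\<lambda>x. (cos (pi / l * of_int (int n - int m) * (x - T)) - cos (pi / l * of_int (int n + int m) * (x - T))) / 2) has_integral (0 - 0) / 2) {T..T+2*l}"
    by (intro has_integral_divide has_integral_diff intC l) (use nm in auto)
  then show ?thesis unfolding e by simp
qed

lemma SC:
  fixes l T :: real assumes l: "l > 0"
  shows "((\<lambda>x. sin (pi / l * real n * (x - T)) * cos (pi / l * real m * (x - T))) has_integral 0) {T..T+2*l}"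
proof -
  have e: "sin (pi / l * real n * (x - T)) * cos (pi / l * real m * (x - T)) =
     (sin (pi / l * of_int (int n + int m) * (x - T)) + sin (pi / l * of_int (int n - int m) * (x - T))) / 2" for x
  proof -
    have a1: "pi / l * of_int (int n - int m) * (x - T) = pi / l * real n * (x - T) - pi / l * real m * (x - T)"
      by (simp add: algebra_simps)
    have a2: "pi / l * of_int (int n + int m) * (x - T) = pi / l * real n * (x - T) + pi / l * real m * (x - T)"
      by (simp add: algebra_simps)
    show ?thesis by (simp only: a1 a2 sin_times_cos)
  qed
  have "((\<lambda>x. (sin (pi / l * of_int (int n + int m) * (x - T)) + sin (pi / l * of_int (int n - int m) * (x - T))) / 2) has_integral (0 + 0) / 2) {T..T+2*l}"
    by (intro has_integral_divide has_integral_add intS l)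
  then show ?thesis unfolding e by simp
qed

lemma CS:
  fixes l T :: real assumes l: "l > 0"
  shows "((\<lambda>x. cos (pi / l * real n * (x - T)) * sin (pi / l * real m * (x - T))) has_integral 0) {T..T+2*l}"
  using SC[OF l, of m T n] by (simp add: mult.commute)

lemma E0: "trig_system (\<lambda>_. 1) (\<lambda>x. x) T l 0 x = 1"
  by (simp add: trig_system_def)
lemma Eo: "k \<noteq> 0 \<Longrightarrow> odd k \<Longrightarrow> trig_system (\<lambda>_. 1) (\<lambda>x. x) T l k x = cos (pi / l * real ((k + 1) div 2) * (x - T))"
  by (simp add: trig_system_def)
lemma Ee: "k \<noteq> 0 \<Longrightarrow> even k \<Longrightarrow> trig_system (\<lambda>_. 1) (\<lambda>x. x) T l k x = sin (pi / l * real (k div 2) * (x - T))"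
  by (simp add: trig_system_def)

lemma orth:
  fixes l T :: real assumes l: "l > 0" and ij: "i \<noteq> j"
  shows "((\<lambda>x. trig_system (\<lambda>_. 1) (\<lambda>x. x) T l i x * trig_system (\<lambda>_. 1) (\<lambda>x. x) T l j x) has_integral 0) {T..T+2*l}"
proof -
  have pos: "k \<noteq> 0 \<Longrightarrow> odd k \<Longrightarrow> (k + 1) div 2 \<noteq> 0" for k :: nat by presburger
  have oo: "odd i \<Longrightarrow> odd j \<Longrightarrow> (i + 1) div 2 \<noteq> (j + 1) div 2" using ij by presburger
  have ee: "i \<noteq> 0 \<Longrightarrow> j \<noteq> 0 \<Longrightarrow> even i \<Longrightarrow> even j \<Longrightarrow> i div 2 \<noteq> j div 2" using ij by presburger
  show ?thesis
  proof (cases "i = 0")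
    case True
    then have j0: "j \<noteq> 0" using ij by simp
    show ?thesis
    proof (cases "odd j")
      case True
      show ?thesis using C1[OF l pos[OF j0 True], where T=T]
        by (simp only: E0 \<open>i = 0\<close> Eo[OF j0 True] mult_1_left)
    next
      case False
      have ev: "even j" using False by simp
      show ?thesis using S1[OF l, where T=T and n="j div 2"]
        by (simp only: E0 \<open>i = 0\<close> Ee[OF j0 ev] mult_1_left)
    qed
  next
    case i0: False
    show ?thesis
    proof (cases "j = 0")
      case True
      show ?thesis
      proof (cases "odd i")
        case True
        show ?thesis using C1[OF l pos[OF i0 True], where T=T]
          by (simp only: E0 \<open>j = 0\<close> Eo[OF i0 True] mult_1_right)
      next
        case False
        have ev: "even i" using False by simp
        show ?thesis using S1[OF l, where T=T and n="i div 2"]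
          by (simp only: E0 \<open>j = 0\<close> Ee[OF i0 ev] mult_1_right)
      qed
    next
      case j0: False
      show ?thesis
      proof (cases "odd i"; cases "odd j")
        assume a: "odd i" "odd j"
        show ?thesis using CC[OF l oo[OF a], where T=T]
          by (simp only: Eo[OF i0 a(1)] Eo[OF j0 a(2)])
      next
        assume a: "odd i" "\<not> odd j"
        have ev: "even j" using a by simp
        show ?thesis using CS[OF l, where T=T and n="(i+1) div 2" and m="j div 2"]
          by (simp only: Eo[OF i0 a(1)] Ee[OF j0 ev])
      next
        assume a: "\<not> odd i" "odd j"
        have ev: "even i" using a by simp
        show ?thesis using SC[OF l, where T=T and n="i div 2" and m="(j+1) div 2"]
          by (simp only: Ee[OF i0 ev] Eo[OF j0 a(2)])
      next
        assume a: "\<not> odd i" "\<not> odd j"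
        have ev: "even i" "even j" using a by simp_all
        show ?thesis using SS[OF l ee[OF i0 j0 ev], where T=T]
          by (simp only: Ee[OF i0 ev(1)] Ee[OF j0 ev(2)])
      qed
    qed
  qed
qed

lemma Econt: "l > 0 \<Longrightarrow> continuous_on S (\<lambda>x. trig_system (\<lambda>_. 1) (\<lambda>x. x) T l k x)"
  by (cases "k = 0"; cases "odd k") (auto simp: trig_system_def intro!: continuous_intros)

theorem mainTheorem7:
  fixes \<mu> :: "real \<Rightarrow> real" and \<phi> :: "real \<Rightarrow> real" and T0 T0\<phi>1 :: real
  assumes mu_cont: "continuous_on {0<..} \<mu>"
    and mu_ge: "\<forall>y>0. \<mu> y \<ge> 7 * y * ln y"
    and ladder: "jacob_ladder \<mu> T0 \<phi>"
    and deriv_phi1: "\<forall>t\<ge>T0. ((\<lambda>s. \<phi> s / 2) has_real_derivative Ztilde2 \<mu> \<phi> t) (at t within {T0..})"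
    and Zt_nonneg: "\<forall>t\<ge>T0. Ztilde2 \<mu> \<phi> t \<ge> 0"
    and phi1_incr: "strict_mono_on {T0..} (\<lambda>s. \<phi> s / 2)"
    and T0phi1: "T0\<phi>1 \<ge> T0" "{T0\<phi>1..} \<subseteq> (\<lambda>s. \<phi> s / 2) ` {T0..}"
  shows "\<forall>T l. T \<ge> T0\<phi>1 \<and> 0 < 2 * l \<and> 2 * l \<le> T / ln T \<longrightarrow>
           (\<forall>i j. i \<noteq> j \<longrightarrow>
              ((\<lambda>t. trig_system (\<lambda>s. sqrt (Ztilde2 \<mu> \<phi> s)) (\<lambda>s. \<phi> s / 2) T l i t *
                     trig_system (\<lambda>s. sqrt (Ztilde2 \<mu> \<phi> s)) (\<lambda>s. \<phi> s / 2) T l j t)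
               has_integral 0)
              {inv_on_from T0 (\<lambda>s. \<phi> s / 2) T .. inv_on_from T0 (\<lambda>s. \<phi> s / 2) (T + 2 * l)})"
proof (intro allI impI)
  fix T l :: real and i j :: nat
  assume H: "T \<ge> T0\<phi>1 \<and> 0 < 2 * l \<and> 2 * l \<le> T / ln T" and ij: "i \<noteq> j"
  define f where "f = (\<lambda>s. \<phi> s / 2)"
  define Z where "Z = Ztilde2 \<mu> \<phi>"
  define h where "h = (\<lambda>x. trig_system (\<lambda>_. 1) (\<lambda>x. x) T l i x * trig_system (\<lambda>_. 1) (\<lambda>x. x) T l j x)"
  have l: "l > 0" using H by simp
  have sm: "strict_mono_on {T0..} f" using phi1_incr by (simp add: f_def)
  have inj: "inj_on f {T0..}" by (rule strict_mono_on_imp_inj_on[OF sm])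
  have "T \<in> f ` {T0..}" using H T0phi1(2) by (auto simp: f_def)
  then obtain ta where ta: "ta \<ge> T0" "f ta = T" by auto
  have "T + 2 * l \<in> f ` {T0..}" using H T0phi1(2) by (auto simp: f_def)
  then obtain tb where tb: "tb \<ge> T0" "f tb = T + 2 * l" by auto
  have inva: "inv_on_from T0 f T = ta"
    unfolding inv_on_from_def
    by (rule the_equality) (use ta in \<open>auto intro: inj_onD[OF inj]\<close>)
  have invb: "inv_on_from T0 f (T + 2 * l) = tb"
    unfolding inv_on_from_def
    by (rule the_equality) (use tb in \<open>auto intro: inj_onD[OF inj]\<close>)
  have tab: "ta \<le> tb"
  proof (rule ccontr)
    assume "\<not> ta \<le> tb"
    then have "f tb \<le> f ta" using strict_mono_on_leD[OF sm, of tb ta] ta tb by auto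
    then show False using ta tb l by simp
  qed
  have fr: "f t \<in> {T..T+2*l}" if "t \<in> {ta..tb}" for t
    using strict_mono_on_leD[OF sm, of ta t] strict_mono_on_leD[OF sm, of t tb] that ta tb by auto
  have hc: "continuous_on {T..T+2*l} h"
    unfolding h_def using l by (intro continuous_on_mult Econt)
  define G where "G = (\<lambda>x. integral {T..x} h)"
  have Gd: "(G has_vector_derivative h x) (at x within {T..T+2*l})" if "x \<in> {T..T+2*l}" for x
    unfolding G_def by (rule integral_has_vector_derivative[OF hc that])
  have fd: "(f has_vector_derivative Z t) (at t within {ta..tb})" if "t \<in> {ta..tb}" for t
  proof -
    have "(f has_real_derivative Z t) (at t within {T0..})"
      using deriv_phi1 that ta by (auto simp: f_def Z_def)
    then have "(f has_vector_derivative Z t) (at t within {T0..})"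
      by (simp add: has_real_derivative_iff_has_vector_derivative)
    then show ?thesis by (rule has_vector_derivative_within_subset) (use ta in auto)
  qed
  have cd: "((G \<circ> f) has_vector_derivative (Z t *\<^sub>R h (f t))) (at t within {ta..tb})" if "t \<in> {ta..tb}" for t
  proof (rule vector_diff_chain_within[OF fd[OF that]])
    show "(G has_vector_derivative h (f t)) (at (f t) within f ` {ta..tb})"
      by (rule has_vector_derivative_within_subset[OF Gd[OF fr[OF that]]]) (use fr in auto)
  qed
  have ftc: "((\<lambda>t. Z t *\<^sub>R h (f t)) has_integral (G \<circ> f) tb - (G \<circ> f) ta) {ta..tb}"
    by (rule fundamental_theorem_of_calculus[OF tab cd])
  have G1: "G (T + 2*l) = 0" unfolding G_def h_def
    by (rule integral_unique[OF orth[OF l ij]])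
  have G0: "G T = 0" unfolding G_def by simp
  have int0: "((\<lambda>t. Z t * h (f t)) has_integral 0) {ta..tb}"
    using ftc G1 G0 ta tb by simp
  have eq: "trig_system (\<lambda>s. sqrt (Z s)) f T l i t * trig_system (\<lambda>s. sqrt (Z s)) f T l j t = Z t * h (f t)"
    if "t \<in> {ta..tb}" for t
  proof -
    have z: "Z t \<ge> 0" using Zt_nonneg that ta by (auto simp: Z_def)
    have a: "trig_system a f T l k t = a t * trig_system (\<lambda>_. 1) (\<lambda>x. x) T l k (f t)" for a k
      by (simp add: trig_system_def)
    show ?thesis unfolding a h_def using z by (simp add: algebra_simps)
  qed
  have "((\<lambda>t. trig_system (\<lambda>s. sqrt (Z s)) f T l i t * trig_system (\<lambda>s. sqrt (Z s)) f T l j t) has_integral 0)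
      {inv_on_from T0 f T .. inv_on_from T0 f (T + 2*l)}"
    unfolding inva invb using int0 eq by (subst has_integral_cong) auto
  then show "((\<lambda>t. trig_system (\<lambda>s. sqrt (Ztilde2 \<mu> \<phi> s)) (\<lambda>s. \<phi> s / 2) T l i t *
                     trig_system (\<lambda>s. sqrt (Ztilde2 \<mu> \<phi> s)) (\<lambda>s. \<phi> s / 2) T l j t)
               has_integral 0)
              {inv_on_from T0 (\<lambda>s. \<phi> s / 2) T .. inv_on_from T0 (\<lambda>s. \<phi> s / 2) (T + 2 * l)}"
    by (simp add: f_def Z_def)
qed

end
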